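(* Let $A(t)=\sum_{n\ge1}|\mathbf{I}_n(201,210)|\,t^n$. Then $A$ satisfies $$(2t^2-2t+1)A^2+(4t^2-3t)A+2t^2=0,$$ and $$A(t)=\frac{3t-4t^2-t\sqrt{1-8t}}{4t^2-4t+2}.$$
   Context: $\mathbf{I}_n=\{(e_1,\dots,e_n)\in\mathbb{N}^n:0\le e_i<i\}$. $\mathbf{I}_n(201,210)$ is the set of $e\in\mathbf{I}_n$ with no indices $i<j<k$ such that $e_j<e_k<e_i$ and no indices $i<j<k$ such that $e_i>e_j>e_k$. *)

theory Defs
  imports Complex_Main "HOL-Computational_Algebra.Formal_Power_Series"
begin

text \<open>Inversion sequences of length n, written as lists e with e = [e_1,...,e_n],
  so the 1-indexed condition 0 <= e_i < i becomes e ! i <= i for 0-indexed i.\<close>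
definition inv_seqs :: "nat \<Rightarrow> nat list set" where
  "inv_seqs n = {e. length e = n \<and> (\<forall>i<n. e ! i < i + 1)}"

definition contains_201 :: "nat list \<Rightarrow> bool" where
  "contains_201 e \<longleftrightarrow> (\<exists>i j k. i < j \<and> j < k \<and> k < length e \<and> e ! j < e ! k \<and> e ! k < e ! i)"

definition contains_210 :: "nat list \<Rightarrow> bool" where
  "contains_210 e \<longleftrightarrow> (\<exists>i j k. i < j \<and> j < k \<and> k < length e \<and> e ! i > e ! j \<and> e ! j > e ! k)"

definition I_201_210 :: "nat \<Rightarrow> nat list set" where
  "I_201_210 n = {e \<in> inv_seqs n. \<not> contains_201 e \<and> \<not> contains_210 e}"

definition coeffA :: "nat \<Rightarrow> real" where
  "coeffA n = (if n = 0 then 0 else real (card (I_201_210 n)))"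

definition fpsA :: "real fps" where
  "fpsA = Abs_fps coeffA"

end

theory Submission
  imports Defs "HOL-Analysis.Generalised_Binomial_Theorem"
begin
unbundle fps_syntax


definition noC :: "nat list \<Rightarrow> bool" where
 "noC e \<longleftrightarrow> (\<forall>i j k. i < j \<longrightarrow> j < k \<longrightarrow> k < length e \<longrightarrow> e!j < e!i \<longrightarrow> e!k < e!i \<longrightarrow> e!j = e!k)"

lemma noC_iff: "(\<not> contains_201 e \<and> \<not> contains_210 e) \<longleftrightarrow> noC e"
proof
  assume a: "\<not> contains_201 e \<and> \<not> contains_210 e"
  show "noC e" unfolding noC_def
  proof (intro allI impI)
    fix i j k assume h: "i < j" "j < k" "k < length e" "e!j < e!i" "e!k < e!i"
    show "e!j = e!k"
    proof (rule ccontr)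
      assume "e!j \<noteq> e!k"
      then have "e!j < e!k \<or> e!k < e!j" by linarith
      then show False
      proof
        assume "e!j < e!k"
        then have "contains_201 e" unfolding contains_201_def using h by blast
        then show False using a by simp
      next
        assume "e!k < e!j"
        then have "contains_210 e" unfolding contains_210_def using h by blast
        then show False using a by simp
      qed
    qed
  qed
next
  assume a: "noC e"
  have n1: "\<not> contains_201 e"
  proof
    assume "contains_201 e"
    then obtain i j k where h: "i < j" "j < k" "k < length e" "e!j < e!k" "e!k < e!i"
      unfolding contains_201_def by blast
    have "e!j = e!k" by (rule a[unfolded noC_def, rule_format, of i j k]) (use h in simp_all)
    then show False using h by simp
  qed
  have n2: "\<not> contains_210 e"
  proof
    assume "contains_210 e"
    then obtain i j k where h: "i < j" "j < k" "k < length e" "e!i > e!j" "e!j > e!k"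
      unfolding contains_210_def by blast
    have "e!j = e!k" by (rule a[unfolded noC_def, rule_format, of i j k]) (use h in simp_all)
    then show False using h by simp
  qed
  show "\<not> contains_201 e \<and> \<not> contains_210 e" using n1 n2 by simp
qed

definition okx :: "nat list \<Rightarrow> nat \<Rightarrow> bool" where
 "okx e x \<longleftrightarrow> (\<forall>i j. i < j \<longrightarrow> j < length e \<longrightarrow> e!j < e!i \<longrightarrow> x < e!i \<longrightarrow> e!j = x)"

lemma noC_snoc1: "noC (e@[x]) \<Longrightarrow> noC e"
  unfolding noC_def
  apply (intro allI impI)
  subgoal for i j k
    apply (drule spec[of _ i], drule spec[of _ j], drule spec[of _ k])
    apply (simp add: nth_append)
    done
  done

lemma noC_snoc2: "noC (e@[x]) \<Longrightarrow> okx e x"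
  unfolding noC_def okx_def
  apply (intro allI impI)
  subgoal for i j
    apply (drule spec[of _ i], drule spec[of _ j], drule spec[of _ "length e"])
    apply (simp add: nth_append)
    done
  done

lemma noC_snoc3: assumes a: "noC e" and b: "okx e x" shows "noC (e@[x])"
  unfolding noC_def
proof (intro allI impI)
  fix i j k assume h: "i < j" "j < k" "k < length (e@[x])" "(e@[x])!j < (e@[x])!i" "(e@[x])!k < (e@[x])!i"
  have jl: "j < length e" "i < length e" using h by simp_all
  have ei: "(e@[x])!i = e!i" "(e@[x])!j = e!j" using jl by (simp_all add: nth_append)
  show "(e@[x])!j = (e@[x])!k"
  proof (cases "k < length e")
    case True
    then have ek: "(e@[x])!k = e!k" by (simp add: nth_append)
    have "e!j = e!k"
      apply (rule a[unfolded noC_def, rule_format, of i j k])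
      using h True ei ek by simp_all
    then show ?thesis using ei ek by simp
  next
    case False
    then have kk: "k = length e" using h by simp
    then have ek: "(e@[x])!k = x" by simp
    have "e!j = x"
      apply (rule b[unfolded okx_def, rule_format, of i j])
      using h jl ei ek by simp_all
    then show ?thesis using ei ek by simp
  qed
qed

lemma noC_snoc: "noC (e@[x]) \<longleftrightarrow> noC e \<and> okx e x"
  using noC_snoc1[of e x] noC_snoc2[of e x] noC_snoc3[of e x] by auto

definition good :: "nat list \<Rightarrow> bool" where
 "good e \<longleftrightarrow> (\<forall>i<length e. e!i \<le> i) \<and> noC e"

lemma good_snoc: "good (e@[x]) \<longleftrightarrow> good e \<and> x \<le> length e \<and> okx e x"
proof -
  have "(\<forall>i<length (e@[x]). (e@[x])!i \<le> i) \<longleftrightarrow> (\<forall>i<length e. e!i \<le> i) \<and> x \<le> length e"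
  proof
    assume a: "\<forall>i<length (e@[x]). (e@[x])!i \<le> i"
    have "\<forall>i<length e. e!i \<le> i"
    proof (intro allI impI)
      fix i assume "i < length e"
      then show "e!i \<le> i" using a[rule_format, of i] by (simp add: nth_append)
    qed
    moreover have "x \<le> length e" using a[rule_format, of "length e"] by simp
    ultimately show "(\<forall>i<length e. e!i \<le> i) \<and> x \<le> length e" by simp
  next
    assume a: "(\<forall>i<length e. e!i \<le> i) \<and> x \<le> length e"
    show "\<forall>i<length (e@[x]). (e@[x])!i \<le> i"
    proof (intro allI impI)
      fix i assume "i < length (e@[x])"
      then have "i < length e \<or> i = length e" by auto
      then show "(e@[x])!i \<le> i" using a by (auto simp: nth_append)
    qed
  qed
  then show ?thesis unfolding good_def noC_snoc by blast
qed

lemma good_prefix: "good (e@f) \<Longrightarrow> good e"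
proof (induction f rule: rev_induct)
  case Nil then show ?case by simp
next
  case (snoc x xs)
  have "good ((e@xs)@[x])" using snoc.prems by simp
  then have "good (e@xs)" using good_snoc by blast
  then show ?case using snoc.IH by blast
qed

lemma I_eq: "I_201_210 n = {e. length e = n \<and> good e}"
proof -
  have "\<And>e. (\<forall>i<length e. e ! i < i + 1) \<longleftrightarrow> (\<forall>i<length e. e ! i \<le> i)" by auto
  then show ?thesis
    unfolding I_201_210_def inv_seqs_def good_def noC_iff[symmetric] by auto
qed

fun stp :: "bool \<times> nat \<times> nat \<times> nat \<Rightarrow> nat \<Rightarrow> bool \<times> nat \<times> nat \<times> nat" where
 "stp (ph, M, H, v) x = (if M \<le> x then (ph, x, H, v) else (True, M, M, x))"

definition st :: "nat list \<Rightarrow> bool \<times> nat \<times> nat \<times> nat" where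
 "st e = foldl stp (False,0,0,0) e"

lemma st_snoc: "st (e@[x]) = stp (st e) x" by (simp add: st_def)
lemma st_Nil: "st [] = (False,0,0,0)" by (simp add: st_def)

definition invs :: "nat list \<Rightarrow> bool \<Rightarrow> nat \<Rightarrow> nat \<Rightarrow> nat \<Rightarrow> bool" where
 "invs e ph M H v \<longleftrightarrow> (\<forall>i<length e. e!i \<le> M) \<and> (e = [] \<longrightarrow> M = 0) \<and> (e \<noteq> [] \<longrightarrow> (\<exists>i<length e. e!i = M)) \<and> H \<le> M \<and>
   (\<not>ph \<longrightarrow> H = 0 \<and> (\<forall>i j. i<j \<longrightarrow> j<length e \<longrightarrow> e!i \<le> e!j)) \<and>
   (ph \<longrightarrow> v < H \<and> (\<exists>i j. i<j \<and> j<length e \<and> e!i = H \<and> e!j = v) \<and>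
       (\<forall>i j. i<j \<longrightarrow> j<length e \<longrightarrow> e!j < e!i \<longrightarrow> e!i \<le> H) \<and>
       (\<forall>i j. i<j \<longrightarrow> j<length e \<longrightarrow> e!j < e!i \<longrightarrow> v < e!i \<longrightarrow> e!j = v))"

lemma ok_char:
  assumes I: "invs e ph M H v"
  shows "okx e x \<longleftrightarrow> (H \<le> x \<or> (ph \<and> x = v))"
proof
  assume ok: "okx e x"
  show "H \<le> x \<or> (ph \<and> x = v)"
  proof (cases ph)
    case False then show ?thesis using I by (simp add: invs_def)
  next
    case True
    then obtain i j where ij: "i<j" "j<length e" "e!i = H" "e!j = v" and vH: "v < H"
      using I unfolding invs_def by blast
    show ?thesis
    proof (rule ccontr)
      assume "\<not> ?thesis"
      then have xH: "x < H" and xv: "x \<noteq> v" using True by auto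
      have "e!j = x" by (rule ok[unfolded okx_def, rule_format, of i j]) (use ij vH xH in simp_all)
      then show False using ij xv by simp
    qed
  qed
next
  assume h: "H \<le> x \<or> (ph \<and> x = v)"
  show "okx e x" unfolding okx_def
  proof (intro allI impI)
    fix i j assume ij: "i<j" "j<length e" "e!j < e!i" "x < e!i"
    show "e!j = x"
    proof (cases ph)
      case False
      then have "e!i \<le> e!j" using I ij unfolding invs_def by blast
      then show ?thesis using ij by simp
    next
      case True
      then have P2: "e!i \<le> H" using I ij unfolding invs_def by blast
      then have xv: "x = v" using h ij by auto
      have "e!j = v" using True I ij xv unfolding invs_def by blast
      then show ?thesis using xv by simp
    qed
  qed
qed

lemma nth_snoc_lt: "i < length e \<Longrightarrow> (e@[x])!i = e!i" by (simp add: nth_append)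

lemma invs_step:
  assumes I: "invs e ph M H v" and ok: "okx e x"
  shows "case stp (ph,M,H,v) x of (ph',M',H',v') \<Rightarrow> invs (e@[x]) ph' M' H' v'"
proof (cases "M \<le> x")
  case True
  have A: "\<forall>i<length (e@[x]). (e@[x])!i \<le> x"
  proof (intro allI impI)
    fix i assume "i < length (e@[x])"
    then have "i < length e \<or> i = length e" by auto
    then show "(e@[x])!i \<le> x" using I True unfolding invs_def by (auto simp: nth_snoc_lt)
  qed
  have B: "\<exists>i<length (e@[x]). (e@[x])!i = x" by (rule exI[of _ "length e"]) simp
  have C: "H \<le> x" using I True unfolding invs_def by simp
  have D: "\<not>ph \<longrightarrow> H = 0 \<and> (\<forall>i j. i<j \<longrightarrow> j<length (e@[x]) \<longrightarrow> (e@[x])!i \<le> (e@[x])!j)"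
  proof (intro impI conjI allI)
    assume "\<not>ph"
    then have s: "H = 0" "\<forall>i j. i<j \<longrightarrow> j<length e \<longrightarrow> e!i \<le> e!j" using I unfolding invs_def by blast+
    show "H = 0" using s by simp
    fix i j assume ij: "i < j" "j < length (e@[x])"
    then have "j < length e \<or> j = length e" by auto
    then show "(e@[x])!i \<le> (e@[x])!j"
    proof
      assume "j < length e" then show ?thesis using s ij by (simp add: nth_snoc_lt)
    next
      assume "j = length e" then show ?thesis using A ij by simp
    qed
  qed
  have E: "ph \<longrightarrow> v < H \<and> (\<exists>i j. i<j \<and> j<length (e@[x]) \<and> (e@[x])!i = H \<and> (e@[x])!j = v) \<and>
       (\<forall>i j. i<j \<longrightarrow> j<length (e@[x]) \<longrightarrow> (e@[x])!j < (e@[x])!i \<longrightarrow> (e@[x])!i \<le> H) \<and>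
       (\<forall>i j. i<j \<longrightarrow> j<length (e@[x]) \<longrightarrow> (e@[x])!j < (e@[x])!i \<longrightarrow> v < (e@[x])!i \<longrightarrow> (e@[x])!j = v)"
  proof (intro impI)
    assume p: ph
    then have s: "v < H" "\<exists>i j. i<j \<and> j<length e \<and> e!i = H \<and> e!j = v"
       "\<forall>i j. i<j \<longrightarrow> j<length e \<longrightarrow> e!j < e!i \<longrightarrow> e!i \<le> H"
       "\<forall>i j. i<j \<longrightarrow> j<length e \<longrightarrow> e!j < e!i \<longrightarrow> v < e!i \<longrightarrow> e!j = v"
      using I unfolding invs_def by blast+
    from s(2) obtain i j where ij: "i<j" "j<length e" "e!i = H" "e!j = v" by blast
    have Q1: "\<exists>i j. i<j \<and> j<length (e@[x]) \<and> (e@[x])!i = H \<and> (e@[x])!j = v"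
      by (rule exI[of _ i], rule exI[of _ j]) (use ij in \<open>simp add: nth_snoc_lt\<close>)
    have Q2: "\<forall>i j. i<j \<longrightarrow> j<length (e@[x]) \<longrightarrow> (e@[x])!j < (e@[x])!i \<longrightarrow> (e@[x])!i \<le> H"
    proof (intro allI impI)
      fix i j
      assume ij: "i < j" "j < length (e@[x])" "(e@[x])!j < (e@[x])!i"
      then have il: "i < length e" by simp
      have "j < length e \<or> j = length e" using ij by auto
      then show "(e@[x])!i \<le> H"
      proof
        assume jl: "j < length e" then show ?thesis using s(3) ij il by (simp add: nth_snoc_lt)
      next
        assume "j = length e"
        then have False using ij il A I True unfolding invs_def by (auto simp: nth_snoc_lt)
        then show ?thesis ..
      qed
    qed
    have Q3: "\<forall>i j. i<j \<longrightarrow> j<length (e@[x]) \<longrightarrow> (e@[x])!j < (e@[x])!i \<longrightarrow> v < (e@[x])!i \<longrightarrow> (e@[x])!j = v"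
    proof (intro allI impI)
      fix i j
      assume ij: "i < j" "j < length (e@[x])" "(e@[x])!j < (e@[x])!i" "v < (e@[x])!i"
      then have il: "i < length e" by simp
      have "j < length e \<or> j = length e" using ij by auto
      then show "(e@[x])!j = v"
      proof
        assume jl: "j < length e" then show ?thesis using s(4) ij il by (simp add: nth_snoc_lt)
      next
        assume "j = length e"
        then have False using ij il A I True unfolding invs_def by (auto simp: nth_snoc_lt)
        then show ?thesis ..
      qed
    qed
    show "v < H \<and> (\<exists>i j. i<j \<and> j<length (e@[x]) \<and> (e@[x])!i = H \<and> (e@[x])!j = v) \<and>
       (\<forall>i j. i<j \<longrightarrow> j<length (e@[x]) \<longrightarrow> (e@[x])!j < (e@[x])!i \<longrightarrow> (e@[x])!i \<le> H) \<and>
       (\<forall>i j. i<j \<longrightarrow> j<length (e@[x]) \<longrightarrow> (e@[x])!j < (e@[x])!i \<longrightarrow> v < (e@[x])!i \<longrightarrow> (e@[x])!j = v)"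
      using s(1) Q1 Q2 Q3 by blast
  qed
  have "invs (e@[x]) ph x H v" unfolding invs_def using A B C D E by simp
  then show ?thesis using True by simp
next
  case False
  then have xM: "x < M" by simp
  have ne: "e \<noteq> []" using I xM unfolding invs_def by auto
  have bnd: "\<forall>i<length e. e!i \<le> M" using I unfolding invs_def by blast
  obtain i0 where i0: "i0 < length e" "e!i0 = M" using I ne unfolding invs_def by blast
  have A: "\<forall>i<length (e@[x]). (e@[x])!i \<le> M"
  proof (intro allI impI)
    fix i assume "i < length (e@[x])"
    then have "i < length e \<or> i = length e" by auto
    then show "(e@[x])!i \<le> M" using bnd xM by (auto simp: nth_snoc_lt)
  qed
  have B: "\<exists>i<length (e@[x]). (e@[x])!i = M" by (rule exI[of _ i0]) (use i0 in \<open>simp add: nth_snoc_lt\<close>)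
  have E2: "\<exists>i j. i<j \<and> j<length (e@[x]) \<and> (e@[x])!i = M \<and> (e@[x])!j = x"
    by (rule exI[of _ i0], rule exI[of _ "length e"]) (use i0 in \<open>simp add: nth_snoc_lt\<close>)
  have E3: "\<forall>i j. i<j \<longrightarrow> j<length (e@[x]) \<longrightarrow> (e@[x])!j < (e@[x])!i \<longrightarrow> (e@[x])!i \<le> M"
    using A by auto
  have E4: "\<forall>i j. i<j \<longrightarrow> j<length (e@[x]) \<longrightarrow> (e@[x])!j < (e@[x])!i \<longrightarrow> x < (e@[x])!i \<longrightarrow> (e@[x])!j = x"
  proof (intro allI impI)
    fix i j assume ij: "i < j" "j < length (e@[x])" "(e@[x])!j < (e@[x])!i" "x < (e@[x])!i"
    then have il: "i < length e" by simp
    have "j < length e \<or> j = length e" using ij by auto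
    then show "(e@[x])!j = x"
    proof
      assume jl: "j < length e"
      have "e!j = x" by (rule ok[unfolded okx_def, rule_format, of i j]) (use ij il jl in \<open>simp_all add: nth_snoc_lt\<close>)
      then show ?thesis using jl by (simp add: nth_snoc_lt)
    next
      assume "j = length e" then show ?thesis by simp
    qed
  qed
  have "invs (e@[x]) True M M x" unfolding invs_def using A B E2 E3 E4 xM by simp
  then show ?thesis using False by simp
qed

lemma invs_st: "noC e \<Longrightarrow> case st e of (ph,M,H,v) \<Rightarrow> invs e ph M H v"
proof (induction e rule: rev_induct)
  case Nil then show ?case by (simp add: st_Nil invs_def)
next
  case (snoc x xs)
  then have n: "noC xs" "okx xs x" using noC_snoc by blast+
  obtain ph M H v where s: "st xs = (ph,M,H,v)" by (cases "st xs") auto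
  have "invs xs ph M H v" using snoc.IH n s by simp
  then have "case stp (ph,M,H,v) x of (ph',M',H',v') \<Rightarrow> invs (xs@[x]) ph' M' H' v'"
    by (rule invs_step[OF _ n(2)])
  then show ?case using s by (simp add: st_snoc)
qed



definition ext :: "nat \<Rightarrow> nat list \<Rightarrow> nat list set" where
  "ext m e = {f. length f = m \<and> good (e@f)}"

lemma ext_0: "good e \<Longrightarrow> ext 0 e = {[]}"
  unfolding ext_def by auto

lemma finite_ext: "finite (ext m e)"
proof -
  have "ext m e \<subseteq> {f. set f \<subseteq> {0..length e + m} \<and> length f = m}"
  proof
    fix f assume "f \<in> ext m e"
    then have f: "length f = m" "good (e@f)" unfolding ext_def by auto
    have "set f \<subseteq> {0..length e + m}"
    proof
      fix y assume "y \<in> set f"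
      then obtain i where i: "i < length f" "f!i = y" by (auto simp: in_set_conv_nth)
      have al: "\<forall>i<length (e@f). (e@f)!i \<le> i" using f(2) unfolding good_def by blast
      have "(e@f)!(length e + i) \<le> length e + i"
        using al[rule_format, of "length e + i"] i(1) by simp
      then show "y \<in> {0..length e + m}" using i f(1) by (simp add: nth_append)
    qed
    then show "f \<in> {f. set f \<subseteq> {0..length e + m} \<and> length f = m}" using f by simp
  qed
  moreover have "finite {f. set f \<subseteq> {0..length e + m} \<and> length f = m}"
    by (rule finite_lists_length_eq) simp
  ultimately show ?thesis by (rule finite_subset)
qed

lemma ext_Suc:
  assumes "good e"
  shows "ext (Suc m) e = (\<Union>x\<in>{x. x \<le> length e \<and> okx e x}. (Cons x) ` ext m (e@[x]))"
proof
  show "ext (Suc m) e \<subseteq> (\<Union>x\<in>{x. x \<le> length e \<and> okx e x}. (Cons x) ` ext m (e@[x]))"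
  proof
    fix f assume "f \<in> ext (Suc m) e"
    then have f: "length f = Suc m" "good (e@f)" unfolding ext_def by auto
    then obtain x f' where xf: "f = x # f'" by (cases f) auto
    have g: "good ((e@[x])@f')" using f(2) xf by simp
    then have "good (e@[x])" by (rule good_prefix)
    then have "x \<le> length e \<and> okx e x" using good_snoc by blast
    moreover have "f' \<in> ext m (e@[x])" using g f(1) xf unfolding ext_def by simp
    ultimately show "f \<in> (\<Union>x\<in>{x. x \<le> length e \<and> okx e x}. (Cons x) ` ext m (e@[x]))"
      using xf by blast
  qed
next
  show "(\<Union>x\<in>{x. x \<le> length e \<and> okx e x}. (Cons x) ` ext m (e@[x])) \<subseteq> ext (Suc m) e"
    unfolding ext_def by auto
qed

lemma card_ext_Suc:
  assumes "good e"
  shows "card (ext (Suc m) e) = (\<Sum>x\<in>{x. x \<le> length e \<and> okx e x}. card (ext m (e@[x])))"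
proof -
  have fin: "finite {x. x \<le> length e \<and> okx e x}" by simp
  have "card (\<Union>x\<in>{x. x \<le> length e \<and> okx e x}. (Cons x) ` ext m (e@[x]))
      = (\<Sum>x\<in>{x. x \<le> length e \<and> okx e x}. card ((Cons x) ` ext m (e@[x])))"
    by (rule card_UN_disjoint[OF fin]) (auto simp: finite_ext)
  also have "\<dots> = (\<Sum>x\<in>{x. x \<le> length e \<and> okx e x}. card (ext m (e@[x])))"
    by (rule sum.cong) (auto simp: card_image inj_on_def)
  finally show ?thesis using ext_Suc[OF assms] by simp
qed

lemma invs_bound:
  assumes "good e" "e \<noteq> []" "invs e ph M H v"
  shows "M < length e" "H \<le> M" "ph \<Longrightarrow> v < H" "\<not> ph \<Longrightarrow> H = 0"
proof -
  obtain i where i: "i < length e" "e!i = M" using assms unfolding invs_def by blast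
  then have "e!i \<le> i" using assms(1) unfolding good_def by blast
  then show "M < length e" using i by simp
  show "H \<le> M" using assms(3) unfolding invs_def by simp
  show "ph \<Longrightarrow> v < H" using assms(3) unfolding invs_def by simp
  show "\<not> ph \<Longrightarrow> H = 0" using assms(3) unfolding invs_def by simp
qed

lemma sum_split_children:
  fixes F :: "nat \<Rightarrow> 'a::comm_monoid_add" and M H v n :: nat
  assumes "H \<le> M" "M < n" "ph \<Longrightarrow> v < H"
  shows "(\<Sum>x\<in>{x. x \<le> n \<and> (H \<le> x \<or> (ph \<and> x = v))}. F x)
       = (\<Sum>x\<in>{M..n}. F x) + (\<Sum>x\<in>{x. x < M \<and> (H \<le> x \<or> (ph \<and> x = v))}. F x)"
proof -
  have "{x. x \<le> n \<and> (H \<le> x \<or> (ph \<and> x = v))} = {M..n} \<union> {x. x < M \<and> (H \<le> x \<or> (ph \<and> x = v))}"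
    using assms by auto
  moreover have "{M..n} \<inter> {x. x < M \<and> (H \<le> x \<or> (ph \<and> x = v))} = {}" by auto
  moreover have "finite {x. x < M \<and> (H \<le> x \<or> (ph \<and> x = v))}" by simp
  ultimately show ?thesis by (simp add: sum.union_disjoint)
qed

lemma card_lowset:
  assumes "H \<le> M" "ph \<Longrightarrow> v < H"
  shows "card {x. x < M \<and> (H \<le> x \<or> (ph \<and> x = v))} = (M - H) + (if ph then 1 else 0)"
proof (cases ph)
  case True
  have "{x. x < M \<and> (H \<le> x \<or> (ph \<and> x = v))} = insert v {H..<M}" using True assms by auto
  then show ?thesis using True assms by simp
next
  case False
  have "{x. x < M \<and> (H \<le> x \<or> (ph \<and> x = v))} = {H..<M}" using False by auto
  then show ?thesis using False by simp
qed

lemma count_main: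
  fixes G :: "bool \<Rightarrow> nat \<Rightarrow> nat \<Rightarrow> real fps"
  assumes rec: "\<And>ph a b. 1 \<le> a \<Longrightarrow> G ph a b = 1 + fps_X * ((\<Sum>j=0..a. G ph (a+1-j) (b+j))
                    + of_nat (b + (if ph then 1 else 0)) * G True (a+1) 0)"
  shows "good e \<Longrightarrow> e \<noteq> [] \<Longrightarrow> st e = (ph,M,H,v) \<Longrightarrow> real (card (ext m e)) = G ph (length e - M) (M - H) $ m"
proof (induction m arbitrary: e ph M H v)
  case 0
  have I: "invs e ph M H v" using invs_st[of e] "0.prems" unfolding good_def by simp
  have "M < length e" using invs_bound[OF "0.prems"(1,2) I] by simp
  then have "1 \<le> length e - M" by simp
  from rec[OF this, of ph "M - H"] have "G ph (length e - M) (M - H) $ 0 = 1" by simp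
  then show ?case using ext_0[OF "0.prems"(1)] by simp
next
  case (Suc m)
  note pr = Suc.prems
  have I: "invs e ph M H v" using invs_st[of e] pr unfolding good_def by simp
  note bd = invs_bound[OF pr(1,2) I]
  define n where "n = length e"
  define a where "a = n - M"
  define b where "b = M - H"
  have a1: "1 \<le> a" using bd(1) unfolding a_def n_def by simp
  define lab where "lab x = (case stp (ph,M,H,v) x of (ph',M',H',v') \<Rightarrow> G ph' (Suc n - M') (M' - H'))" for x
  have ch: "{x. x \<le> length e \<and> okx e x} = {x. x \<le> n \<and> (H \<le> x \<or> (ph \<and> x = v))}"
    using ok_char[OF I] unfolding n_def by auto
  have IHx: "real (card (ext m (e@[x]))) = lab x $ m" if x: "x \<le> n \<and> (H \<le> x \<or> (ph \<and> x = v))" for x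
  proof -
    have okx: "okx e x" using ok_char[OF I] x by simp
    have g: "good (e@[x])" using good_snoc pr(1) okx x unfolding n_def by blast
    obtain ph' M' H' v' where s: "stp (ph,M,H,v) x = (ph',M',H',v')" by (cases "stp (ph,M,H,v) x") auto
    have "st (e@[x]) = (ph',M',H',v')" using s pr(3) by (simp add: st_snoc)
    from Suc.IH[OF g _ this] have "real (card (ext m (e@[x]))) = G ph' (length (e@[x]) - M') (M' - H') $ m" by simp
    then show ?thesis unfolding lab_def using s n_def by simp
  qed
  have "real (card (ext (Suc m) e)) = (\<Sum>x\<in>{x. x \<le> n \<and> (H \<le> x \<or> (ph \<and> x = v))}. real (card (ext m (e@[x]))))"
    using card_ext_Suc[OF pr(1), of m] ch by simp
  also have "\<dots> = (\<Sum>x\<in>{x. x \<le> n \<and> (H \<le> x \<or> (ph \<and> x = v))}. lab x $ m)"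
    by (rule sum.cong) (use IHx in auto)
  also have "\<dots> = (\<Sum>x\<in>{x. x \<le> n \<and> (H \<le> x \<or> (ph \<and> x = v))}. lab x) $ m"
    by (simp add: fps_sum_nth)
  also have "(\<Sum>x\<in>{x. x \<le> n \<and> (H \<le> x \<or> (ph \<and> x = v))}. lab x)
       = (\<Sum>x\<in>{M..n}. lab x) + (\<Sum>x\<in>{x. x < M \<and> (H \<le> x \<or> (ph \<and> x = v))}. lab x)"
    by (rule sum_split_children) (use bd n_def in auto)
  also have "(\<Sum>x\<in>{M..n}. lab x) = (\<Sum>j=0..a. G ph (a+1-j) (b+j))"
  proof -
    have "(\<Sum>x\<in>{M..n}. lab x) = (\<Sum>x\<in>{0+M..a+M}. lab x)" using bd n_def a_def by simp
    also have "\<dots> = (\<Sum>j=0..a. lab (j+M))" by (rule sum.shift_bounds_cl_nat_ivl)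
    also have "\<dots> = (\<Sum>j=0..a. G ph (a+1-j) (b+j))"
    proof (rule sum.cong)
      fix j assume "j \<in> {0..a}"
      then have j: "j \<le> a" by simp
      have "lab (j+M) = G ph (Suc n - (j+M)) (j + M - H)" unfolding lab_def by simp
      moreover have "Suc n - (j+M) = a+1-j" using j bd n_def a_def by simp
      moreover have "j + M - H = b + j" using bd b_def by simp
      ultimately show "lab (j+M) = G ph (a+1-j) (b+j)" by simp
    qed simp
    finally show ?thesis .
  qed
  also have "(\<Sum>x\<in>{x. x < M \<and> (H \<le> x \<or> (ph \<and> x = v))}. lab x)
      = of_nat (b + (if ph then 1 else 0)) * G True (a+1) 0"
  proof -
    have "(\<Sum>x\<in>{x. x < M \<and> (H \<le> x \<or> (ph \<and> x = v))}. lab x)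
        = (\<Sum>x\<in>{x. x < M \<and> (H \<le> x \<or> (ph \<and> x = v))}. G True (a+1) 0)"
    proof (rule sum.cong)
      fix x assume "x \<in> {x. x < M \<and> (H \<le> x \<or> (ph \<and> x = v))}"
      then have "x < M" by simp
      moreover have "Suc n - M = a + 1" using bd n_def a_def by simp
      ultimately show "lab x = G True (a+1) 0" unfolding lab_def by simp
    qed simp
    also have "\<dots> = of_nat (card {x. x < M \<and> (H \<le> x \<or> (ph \<and> x = v))}) * G True (a+1) 0"
      by simp
    finally show ?thesis using card_lowset[OF bd(2), of ph v] bd b_def by simp
  qed
  finally have L: "real (card (ext (Suc m) e)) = ((\<Sum>j=0..a. G ph (a+1-j) (b+j))
                    + of_nat (b + (if ph then 1 else 0)) * G True (a+1) 0) $ m" .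
  have "G ph a b $ Suc m = ((\<Sum>j=0..a. G ph (a+1-j) (b+j))
                    + of_nat (b + (if ph then 1 else 0)) * G True (a+1) 0) $ m"
    by (subst rec[OF a1]) simp
  then show ?case using L a_def b_def n_def by simp
qed



lemma fps_numeral_mult_nth [simp]: "(numeral k * (f::real fps)) $ n = numeral k * f $ n"
  by (simp add: fps_numeral_fps_const)

definition S :: "real fps" where "S = Abs_fps (\<lambda>n. ((1/2::real) gchoose n) * (-8)^n)"

lemma S_sq: "S * S = 1 - 8 * fps_X"
proof (rule fps_ext)
  fix n
  let ?B = "fps_binomial (1/2::real)"
  have BB: "?B * ?B = 1 + fps_X"
    proof -
    have "(1/2::real) + 1/2 = 1" by simp
    then show ?thesis using fps_binomial_add_mult[of "1/2::real" "1/2"] fps_binomial_1 by metis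
  qed
  have "(S * S) $ n = (\<Sum>i=0..n. (((1/2::real) gchoose i) * (-8)^i) * (((1/2::real) gchoose (n-i)) * (-8)^(n-i)))"
    by (simp add: fps_mult_nth S_def)
  also have "\<dots> = (\<Sum>i=0..n. (-8)^n * (?B $ i * ?B $ (n - i)))"
  proof (rule sum.cong)
    fix i assume "i \<in> {0..n}"
    then have "(-8::real)^i * (-8)^(n-i) = (-8)^n" by (simp add: power_add[symmetric])
    then show "(((1/2::real) gchoose i) * (-8)^i) * (((1/2::real) gchoose (n-i)) * (-8)^(n-i)) = (-8)^n * (?B $ i * ?B $ (n - i))"
      by (simp add: algebra_simps)
  qed simp
  also have "\<dots> = (-8)^n * (?B * ?B) $ n" by (simp add: fps_mult_nth sum_distrib_left)
  also have "\<dots> = (1 - 8 * fps_X :: real fps) $ n" unfolding BB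
    by (cases n; cases "n - 1") (auto simp: fps_numeral_nth)
  finally show "(S * S) $ n = (1 - 8 * fps_X :: real fps) $ n" .
qed


lemma S0: "S $ 0 = 1" by (simp add: S_def)
lemma S1: "S $ Suc 0 = -4" by (simp add: S_def gbinomial_Suc)
lemma S2: "S $ Suc (Suc 0) = -8" by (simp add: S_def gbinomial_Suc)

definition C :: "real fps" where "C = Abs_fps (\<lambda>n. - S $ Suc n / 4)"

lemma S_C: "S = 1 - 4 * fps_X * C"
proof (rule fps_ext)
  fix n show "S $ n = (1 - 4 * fps_X * C) $ n"
    by (cases n) (simp_all add: S0 C_def mult.assoc)
qed

lemma C_eq: "2 * fps_X * C^2 = C - 1"
proof -
  have "(1 - 4 * fps_X * C) * (1 - 4 * fps_X * C) = 1 - 8 * fps_X" using S_sq S_C by simp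
  then have "fps_X * (8 * (2 * fps_X * C^2 - C + 1)) = 0"
    by (simp add: algebra_simps power2_eq_square)
  then have "8 * (2 * fps_X * C^2 - C + 1) = (0::real fps)" by simp
  moreover have "(8::real fps) \<noteq> 0"
  proof
    assume "(8::real fps) = 0" then have "(8::real fps) $ 0 = 0" by simp
    then show False by simp
  qed
  ultimately have "2 * fps_X * C^2 - C + 1 = (0::real fps)" using mult_eq_0_iff by blast
  then show ?thesis by (simp add: algebra_simps)
qed

lemma C0: "C $ 0 = 1" by (simp add: C_def S1)
lemma C1: "C $ Suc 0 = 2" by (simp add: C_def S2)

lemma C_ne1: "C - 1 \<noteq> 0"
proof
  assume "C - 1 = 0"
  then have "(C - 1) $ Suc 0 = 0" by simp
  then show False using C1 by simp
qed

definition Iv :: "real fps" where "Iv = inverse (1 + C^2)"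

lemma Iv: "(1 + C^2) * Iv = 1"
  unfolding Iv_def by (rule inverse_mult_eq_1') (simp add: C0 power2_eq_square)


lemma alg_post:
  fixes X C P P0 T Iv K L A B :: "real fps"
  assumes h1: "(C-1)*P0 = C*P - 1" and h2: "(C-1)^2*T = C*C*P - C - (A+1)*(C-1)*C"
    and h3: "2*X*C^2 = C - 1" and h4: "(1+C^2)*Iv = 1" and h5: "K = C^2*Iv" and h6: "L = 2*X*C^3*Iv"
  shows "(C-1)^2 * (K*(1 + P) + B*L*P) = (C-1)^2 * (1 + X*((A+1)*K + K*C*P0 + B*L*C*P0 + L*T + (B+1)*(K*(1 + C*P))))"
  using assms by algebra

lemma alg_pre:
  fixes X C P P0 T Iv K L A B :: "real fps"
  assumes h1: "(C-1)*P0 = C*C*P - 1" and h2: "(C-1)^2*T = C*C*C*P - C - (A+1)*(C-1)*C"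
    and h3: "2*X*C^2 = C - 1" and h4: "(1+C^2)*Iv = 1" and h5: "K = C^2*Iv" and h6: "L = 2*X*C^3*Iv"
  shows "(C-1)^2 * (K*(1 + P) + B*L*C*P) = (C-1)^2 * (1 + X*((A+1)*K + K*P0 + B*L*C*P0 + L*T + B*(K*(1 + C*C*P))))"
  using assms by algebra

lemma geo1: "((Y::real fps) - 1) * (\<Sum>k=0..a. Y^k) = Y^(a+1) - 1"
  by (induction a) (simp_all add: algebra_simps)

lemma geo2: "((Y::real fps) - 1)^2 * (\<Sum>k=0..a. of_nat (a-k) * Y^(k+1)) = Y^(a+2) - Y - of_nat (a+1) * (Y-1) * Y"
proof (induction a)
  case 0 then show ?case by (simp add: algebra_simps power2_eq_square)
next
  case (Suc a)
  have "(\<Sum>k=0..Suc a. of_nat (Suc a - k) * Y^(k+1)) = (\<Sum>k=0..a. of_nat (Suc a - k) * Y^(k+1))"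
    by simp
  also have "\<dots> = (\<Sum>k=0..a. of_nat (a - k) * Y^(k+1) + Y * Y^k)"
    by (rule sum.cong) (auto simp: Suc_diff_le algebra_simps)
  also have "\<dots> = (\<Sum>k=0..a. of_nat (a - k) * Y^(k+1)) + Y * (\<Sum>k=0..a. Y^k)"
    by (simp add: sum.distrib sum_distrib_left)
  finally have e: "(\<Sum>k=0..Suc a. of_nat (Suc a - k) * Y^(k+1)) = (\<Sum>k=0..a. of_nat (a - k) * Y^(k+1)) + Y * (\<Sum>k=0..a. Y^k)" .
  have "(Y-1)^2 * (\<Sum>k=0..Suc a. of_nat (Suc a - k) * Y^(k+1))
      = (Y-1)^2 * (\<Sum>k=0..a. of_nat (a - k) * Y^(k+1)) + (Y - 1) * Y * ((Y-1) * (\<Sum>k=0..a. Y^k))"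
    unfolding e by (simp add: algebra_simps power2_eq_square)
  also have "\<dots> = Y^(a+2) - Y - of_nat (a+1) * (Y-1) * Y + (Y-1) * Y * (Y^(a+1) - 1)"
    unfolding Suc.IH geo1 by simp
  also have "\<dots> = Y^(Suc a+2) - Y - of_nat (Suc a+1) * (Y-1) * Y"
    by (simp add: algebra_simps)
  finally show ?case .
qed

definition K :: "real fps" where "K = C^2 * Iv"
definition L :: "real fps" where "L = 2 * fps_X * C^3 * Iv"

definition G :: "bool \<Rightarrow> nat \<Rightarrow> nat \<Rightarrow> real fps" where
  "G ph a b = (if ph then K * (1 + C^a) else K * (1 + C^(a-1))) + of_nat b * L * C^a"

lemma G_sum:
  "(\<Sum>j=0..a. G ph (a+1-j) (b+j)) = of_nat (a+1) * K + K * (\<Sum>k=0..a. C^(if ph then k+1 else k))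
     + of_nat b * L * (C * (\<Sum>k=0..a. C^k)) + L * (\<Sum>k=0..a. of_nat (a-k) * C^(k+1))"
proof -
  have "(\<Sum>j=0..a. G ph (a+1-j) (b+j)) = (\<Sum>k=0..a. G ph (a+1-(a + 0 - k)) (b+(a + 0 - k)))"
    by (rule sum.atLeastAtMost_rev)
  also have "\<dots> = (\<Sum>k=0..a. K + K * C^(if ph then k+1 else k) + of_nat b * L * (C * C^k) + L * (of_nat (a-k) * C^(k+1)))"
  proof (rule sum.cong)
    fix k assume "k \<in> {0..a}"
    then have k: "k \<le> a" by simp
    then have e1: "a+1-(a + 0 - k) = k+1" by simp
    show "G ph (a+1-(a + 0 - k)) (b+(a + 0 - k)) = K + K * C^(if ph then k+1 else k) + of_nat b * L * (C * C^k) + L * (of_nat (a-k) * C^(k+1))"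
      unfolding e1 G_def using k by (simp add: algebra_simps)
  qed simp
  also have "\<dots> = of_nat (a+1) * K + K * (\<Sum>k=0..a. C^(if ph then k+1 else k))
     + of_nat b * L * (C * (\<Sum>k=0..a. C^k)) + L * (\<Sum>k=0..a. of_nat (a-k) * C^(k+1))"
    by (simp add: sum.distrib sum_distrib_left)
  finally show ?thesis .
qed

lemma G_rec:
  assumes a1: "1 \<le> a"
  shows "G ph a b = 1 + fps_X * ((\<Sum>j=0..a. G ph (a+1-j) (b+j))
                    + of_nat (b + (if ph then 1 else 0)) * G True (a+1) 0)"
proof -
  define P0 where "P0 = (\<Sum>k=0..a. C^k)"
  define T where "T = (\<Sum>k=0..a. of_nat (a-k) * C^(k+1) :: real fps)"
  have hP0: "(C-1)*P0 = C^(a+1) - 1" unfolding P0_def by (rule geo1)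
  have hT: "(C-1)^2*T = C^(a+2) - C - of_nat (a+1) * (C-1) * C" unfolding T_def by (rule geo2)
  have h3: "2*fps_X*C^2 = C - 1" by (rule C_eq)
  have h4: "(1+C^2)*Iv = 1" by (rule Iv)
  have h5: "K = C^2*Iv" by (simp add: K_def)
  have h6: "L = 2*fps_X*C^3*Iv" by (simp add: L_def)
  have cne: "(C-1)^2 \<noteq> 0" using C_ne1 by simp
  show ?thesis
  proof (cases ph)
    case True
    have sC: "(\<Sum>k=0..a. C^(k+1)) = C * P0" unfolding P0_def by (simp add: sum_distrib_left)
    have "(C-1)^2 * (K*(1 + C^a) + of_nat b*L*C^a) = (C-1)^2 * (1 + fps_X*((of_nat a+1)*K + K*C*P0 + of_nat b*L*C*P0 + L*T + (of_nat b+1)*(K*(1 + C*C^a))))"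
      by (rule alg_post[OF _ _ h3 h4 h5 h6]) (use hP0 hT in \<open>simp_all add: algebra_simps\<close>)
    then have "K*(1 + C^a) + of_nat b*L*C^a = 1 + fps_X*((of_nat a+1)*K + K*C*P0 + of_nat b*L*C*P0 + L*T + (of_nat b+1)*(K*(1 + C*C^a)))"
      using cne by simp
    then have E: "K*(1 + C^a) + of_nat b*L*C^a = 1 + fps_X*((of_nat (a+1))*K + K*(C*P0) + of_nat b*L*(C*P0) + L*T + of_nat (b + (if ph then 1 else 0))*(K*(1 + C*C^a)))"
      using True by (simp add: algebra_simps)
    have sC': "(\<Sum>k=0..a. C^(if ph then k+1 else k)) = C * P0" using True sC by simp
    have g1: "G ph a b = K*(1 + C^a) + of_nat b*L*C^a" using True by (simp add: G_def)
    have g2: "G True (a+1) 0 = K*(1 + C*C^a)" by (simp add: G_def)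
    show ?thesis unfolding g1 g2 G_sum sC' using E by (simp add: P0_def T_def)
  next
    case False
    obtain a' where a': "a = Suc a'" using a1 by (cases a) auto
    have "(C-1)^2 * (K*(1 + C^a') + of_nat b*L*C*C^a') = (C-1)^2 * (1 + fps_X*((of_nat a+1)*K + K*P0 + of_nat b*L*C*P0 + L*T + of_nat b*(K*(1 + C*C*C^a'))))"
      by (rule alg_pre[OF _ _ h3 h4 h5 h6]) (use hP0 hT a' in \<open>simp_all add: algebra_simps\<close>)
    then have "K*(1 + C^a') + of_nat b*L*C*C^a' = 1 + fps_X*((of_nat a+1)*K + K*P0 + of_nat b*L*C*P0 + L*T + of_nat b*(K*(1 + C*C*C^a')))"
      using cne by simp
    then have E: "K*(1 + C^a') + of_nat b*L*(C*C^a') = 1 + fps_X*((of_nat (a+1))*K + K*P0 + of_nat b*L*(C*P0) + L*T + of_nat (b + (if ph then 1 else 0))*(K*(1 + C*(C*C^a'))))"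
      using False by (simp add: algebra_simps)
    have sC': "(\<Sum>k=0..a. C^(if ph then k+1 else k)) = P0" using False by (simp add: P0_def)
    have g1: "G ph a b = K*(1 + C^a') + of_nat b*L*(C*C^a')" using False a' by (simp add: G_def)
    have g2: "G True (a+1) 0 = K*(1 + C*(C*C^a'))" using a' by (simp add: G_def)
    show ?thesis unfolding g1 g2 G_sum sC' using E by (simp add: P0_def T_def)
  qed
qed



lemma good_0: "good [0]"
  unfolding good_def noC_def by auto

lemma st_0: "st [0] = (False,0,0,0)" by (simp add: st_def)

lemma I_image: "1 \<le> n \<Longrightarrow> I_201_210 n = (Cons 0) ` ext (n-1) [0]"
proof
  assume n: "1 \<le> n"
  show "I_201_210 n \<subseteq> (Cons 0) ` ext (n-1) [0]"
  proof
    fix e assume "e \<in> I_201_210 n"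
    then have e: "length e = n" "good e" unfolding I_eq by auto
    then obtain y f where yf: "e = y # f" using n by (cases e) auto
    have al: "\<forall>i<length e. e!i \<le> i" using e(2) unfolding good_def by blast
    have "e!0 \<le> 0" using al[rule_format, of 0] e n by simp
    then have y0: "y = 0" using yf by simp
    have "good ([0] @ f)" using e(2) yf y0 by simp
    then have "f \<in> ext (n-1) [0]" unfolding ext_def using e(1) yf by simp
    then show "e \<in> (Cons 0) ` ext (n-1) [0]" using yf y0 by blast
  qed
next
  assume n: "1 \<le> n"
  show "(Cons 0) ` ext (n-1) [0] \<subseteq> I_201_210 n"
  proof
    fix e assume "e \<in> (Cons 0) ` ext (n-1) [0]"
    then obtain f where f: "e = 0 # f" "length f = n - 1" "good ([0]@f)" unfolding ext_def by auto
    then show "e \<in> I_201_210 n" unfolding I_eq using n by auto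
  qed
qed

lemma coeffA_G: "1 \<le> n \<Longrightarrow> coeffA n = G False 1 0 $ (n-1)"
proof -
  assume n: "1 \<le> n"
  have "card (I_201_210 n) = card (ext (n-1) [0])"
    unfolding I_image[OF n] by (rule card_image) (auto simp: inj_on_def)
  moreover have "real (card (ext (n-1) [0])) = G False (length [0] - 0) (0 - 0) $ (n-1)"
    using count_main[OF G_rec good_0 _ st_0] by simp
  ultimately show ?thesis using n by (simp add: coeffA_def)
qed

lemma fpsA_G: "fpsA = fps_X * G False 1 0"
proof (rule fps_ext)
  fix n show "fpsA $ n = (fps_X * G False 1 0) $ n"
  proof (cases n)
    case 0 then show ?thesis by (simp add: fpsA_def coeffA_def)
  next
    case (Suc m)
    have "fpsA $ n = coeffA n" by (simp add: fpsA_def)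
    also have "\<dots> = G False 1 0 $ m" using coeffA_G[of n] Suc by simp
    finally show ?thesis using Suc by simp
  qed
qed

lemma fpsA_K: "fpsA = 2 * fps_X * C^2 * Iv"
  unfolding fpsA_G G_def K_def by (simp add: algebra_simps)

lemma quad: "(2 * fps_X ^ 2 - 2 * fps_X + 1) * fpsA ^ 2 + (4 * fps_X ^ 2 - 3 * fps_X) * fpsA
           + 2 * fps_X ^ 2 = (0 :: real fps)"
proof -
  have h3: "2*fps_X*C^2 = C - 1" by (rule C_eq)
  have h4: "(1+C^2)*Iv = 1" by (rule Iv)
  show ?thesis unfolding fpsA_K using h3 h4 by algebra
qed

lemma lin: "fpsA * (2 - 4 * fps_X + 4 * fps_X^2) = 3 * fps_X - 4 * fps_X^2 - fps_X * S"
proof -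
  have h3: "2*fps_X*C^2 = C - 1" by (rule C_eq)
  have h4: "(1+C^2)*Iv = 1" by (rule Iv)
  show ?thesis unfolding fpsA_K S_C using h3 h4 by algebra
qed



lemma gbin_bound: "\<bar>(1/2::real) gchoose k\<bar> \<le> 1"
proof -
  have p: "\<bar>\<Prod>i=0..<k. (1/2::real) - of_nat i\<bar> \<le> (\<Prod>i=0..<k. of_nat (Suc i))"
    unfolding abs_prod by (rule prod_mono) auto
  have f: "(fact k :: real) = (\<Prod>i=0..<k. of_nat (Suc i))"
    by (simp add: fact_prod_Suc)
  have fp: "(fact k :: real) > 0" by simp
  have "\<bar>(1/2::real) gchoose k\<bar> = \<bar>\<Prod>i=0..<k. (1/2::real) - of_nat i\<bar> / fact k"
    by (simp add: gbinomial_prod_rev)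
  also have "\<dots> \<le> 1" using p f fp by simp
  finally show ?thesis .
qed

lemma S_bound: "\<bar>S $ k\<bar> \<le> 8^k"
proof -
  have "\<bar>S $ k\<bar> = \<bar>(1/2::real) gchoose k\<bar> * 8^k" by (simp add: S_def abs_mult power_abs)
  also have "\<dots> \<le> 1 * 8^k" by (rule mult_right_mono[OF gbin_bound]) simp
  finally show ?thesis by simp
qed

lemma lin_nth: "2 * coeffA n - (if n = 0 then 0 else 4 * coeffA (n-1)) + (if n \<le> 1 then 0 else 4 * coeffA (n-2))
   = (if n = 1 then 3 else 0) - (if n = 2 then 4 else 0) - (if n = 0 then 0 else S $ (n-1))"
proof -
  have e1: "fpsA * (2 - 4 * fps_X + 4 * fps_X^2) = 2 * fpsA - 4 * (fps_X * fpsA) + 4 * (fps_X * (fps_X * fpsA))"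
    by (simp add: algebra_simps power2_eq_square)
  have "(fpsA * (2 - 4 * fps_X + 4 * fps_X^2)) $ n = (3 * fps_X - 4 * fps_X^2 - fps_X * S) $ n"
    using lin by simp
  then show ?thesis unfolding e1
    by (cases n; cases "n - 1") (auto simp: fpsA_def fps_X_nth numeral_2_eq_2 fps_numeral_nth)
qed

lemma coeffA_0: "coeffA 0 = 0" by (simp add: coeffA_def)

lemma coeffA_bound: "\<bar>coeffA n\<bar> \<le> 8^n"
proof (induction n rule: less_induct)
  case (less n)
  show ?case
  proof (cases "n \<le> 1")
    case True
    then have "n = 0 \<or> n = 1" by auto
    then show ?thesis
    proof
      assume "n = 0" then show ?thesis by (simp add: coeffA_0)
    next
      assume n1: "n = 1"
      have "coeffA 1 = 1" using lin_nth[of 1] coeffA_0 S0 by simp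
      then show ?thesis using n1 by simp
    qed
  next
    case False
    then obtain m where m: "n = Suc (Suc m)" by (cases n; cases "n - 1") auto
    have L: "2*coeffA (Suc(Suc m)) - 4*coeffA (Suc m) + 4*coeffA m = - (if m = 0 then 4 else 0) - S$(Suc m)"
      using lin_nth[of "Suc (Suc m)"] by (simp add: numeral_2_eq_2)
    have r: "2 * coeffA n = 4 * coeffA (Suc m) - 4 * coeffA m + ((if n = 2 then -4 else 0) - S $ (Suc m))"
      using L unfolding m by (cases "m = 0") (simp_all add: numeral_2_eq_2)
    have b1: "\<bar>coeffA (Suc m)\<bar> \<le> 8 * 8^m" using less[of "Suc m"] m by simp
    have b0: "\<bar>coeffA m\<bar> \<le> 8^m" using less[of m] m by simp
    have bs: "\<bar>S $ Suc m\<bar> \<le> 8 * 8^m" using S_bound[of "Suc m"] by simp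
    have bn: "\<bar>(if n = 2 then -4 else 0::real)\<bar> \<le> 4" by simp
    have g1: "(1::real) \<le> 8^m" by simp
    have "\<bar>2 * coeffA n\<bar> \<le> 4 * \<bar>coeffA (Suc m)\<bar> + 4 * \<bar>coeffA m\<bar> + 4 + \<bar>S $ Suc m\<bar>"
      unfolding r using bn by (auto simp: abs_if split: if_splits)
    also have "\<dots> \<le> 4 * (8 * 8^m) + 4 * 8^m + 4 * 8^m + 8 * 8^m"
      using b1 b0 bs g1 by linarith
    finally have "\<bar>coeffA n\<bar> \<le> 24 * 8^m" by simp
    also have "\<dots> \<le> 8^n" using m by simp
    finally show ?thesis .
  qed
qed


lemma fps_cauchy_sums:
  fixes F H :: "real fps" and t :: real
  assumes a: "summable (\<lambda>n. norm (F $ n * t^n))" and b: "summable (\<lambda>n. norm (H $ n * t^n))"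
  shows "(\<lambda>n. (F * H) $ n * t^n) sums ((\<Sum>n. F $ n * t^n) * (\<Sum>n. H $ n * t^n))"
proof -
  have "(\<lambda>k. \<Sum>i\<le>k. (F $ i * t^i) * (H $ (k - i) * t^(k-i))) sums ((\<Sum>n. F $ n * t^n) * (\<Sum>n. H $ n * t^n))"
    by (rule Cauchy_product_sums[OF a b])
  moreover have "(\<Sum>i\<le>k. (F $ i * t^i) * (H $ (k - i) * t^(k-i))) = (F * H) $ k * t^k" for k
  proof -
    have "(\<Sum>i\<le>k. (F $ i * t^i) * (H $ (k - i) * t^(k-i))) = (\<Sum>i=0..k. (F $ i * H $ (k - i)) * t^k)"
    proof (rule sum.cong)
      show "{..k} = {0..k}" by auto
    next
      fix i assume "i \<in> {0..k}"
      then have "t^i * t^(k-i) = t^k" by (simp add: power_add[symmetric])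
      then show "(F $ i * t^i) * (H $ (k - i) * t^(k-i)) = (F $ i * H $ (k - i)) * t^k"
        by (simp add: algebra_simps)
    qed
    also have "\<dots> = (F * H) $ k * t^k" by (simp add: fps_mult_nth sum_distrib_right)
    finally show ?thesis .
  qed
  ultimately show ?thesis by simp
qed

lemma poly_sums:
  fixes F :: "real fps"
  assumes "\<And>n. n > 2 \<Longrightarrow> F $ n = 0"
  shows "(\<lambda>n. F $ n * t^n) sums (F $ 0 + F $ 1 * t + F $ 2 * t^2)"
    and "summable (\<lambda>n. norm (F $ n * t^n))"
proof -
  have "(\<lambda>n. F $ n * t^n) sums (\<Sum>n\<in>{0,1,2}. F $ n * t^n)"
    by (rule sums_finite) (use assms in auto)
  then show "(\<lambda>n. F $ n * t^n) sums (F $ 0 + F $ 1 * t + F $ 2 * t^2)" by (simp add: add.assoc)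
  show "summable (\<lambda>n. norm (F $ n * t^n))"
    by (rule summable_finite[of "{0,1,2}"]) (use assms in auto)
qed

lemma geo_bound_summable:
  fixes f :: "nat \<Rightarrow> real" and t :: real
  assumes "\<And>n. \<bar>f n\<bar> \<le> 8^n" and "\<bar>t\<bar> < 1/8"
  shows "summable (\<lambda>n. norm (f n * t^n))"
proof (rule summable_comparison_test'[of "\<lambda>n. (8 * \<bar>t\<bar>)^n" 0])
  show "summable (\<lambda>n. (8 * \<bar>t\<bar>)^n)" by (rule summable_geometric) (use assms(2) in simp)
next
  fix n :: nat
  have "\<bar>f n\<bar> * \<bar>t\<bar>^n \<le> 8^n * \<bar>t\<bar>^n" by (rule mult_right_mono[OF assms(1)]) simp
  then show "norm (norm (f n * t^n)) \<le> (8 * \<bar>t\<bar>)^n" by (simp add: abs_mult power_abs power_mult_distrib)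
qed

lemma S_sums:
  fixes t :: real assumes t: "\<bar>t\<bar> < 1/8"
  shows "(\<lambda>n. S $ n * t^n) sums sqrt (1 - 8*t)"
proof -
  have "\<bar>-8*t\<bar> < 1" using t by simp
  from gen_binomial_real[OF this, of "1/2"]
  have "(\<lambda>n. ((1/2::real) gchoose n) * (-8*t)^n) sums (1 + -8*t) powr (1/2)" .
  moreover have "(1 + -8*t) powr (1/2) = sqrt (1 - 8*t)" using t by (simp add: powr_half_sqrt)
  moreover have "((1/2::real) gchoose n) * (-8*t)^n = S $ n * t^n" for n
  proof -
    have e: "((-8::real)*t)^n = (-8)^n * t^n" by (rule power_mult_distrib)
    show ?thesis unfolding e by (simp add: S_def mult.assoc)
  qed
  ultimately show ?thesis by simp
qed

lemma main_sums:
  fixes t :: real assumes t: "\<bar>t\<bar> < 1/8"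
  shows "(\<lambda>n. coeffA n * t^n) sums ((3 * t - 4 * t ^ 2 - t * sqrt (1 - 8 * t)) / (4 * t ^ 2 - 4 * t + 2))"
proof -
  define D :: "real fps" where "D = 2 - 4 * fps_X + 4 * fps_X^2"
  define P :: "real fps" where "P = 3 * fps_X - 4 * fps_X^2"
  have Dn: "D $ n = (if n = 0 then 2 else if n = 1 then -4 else if n = 2 then 4 else 0)" for n
    unfolding D_def by (auto simp: fps_X_nth fps_numeral_nth)
  have Pn: "P $ n = (if n = 1 then 3 else if n = 2 then -4 else 0)" for n
    unfolding P_def by (auto simp: fps_X_nth fps_numeral_nth)
  have Xn: "fps_X $ n = (if n = 1 then 1 else (0::real))" for n by (simp add: fps_X_nth)
  have sA: "summable (\<lambda>n. norm (fpsA $ n * t^n))"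
    using geo_bound_summable[OF coeffA_bound t] by (simp add: fpsA_def)
  have sS: "summable (\<lambda>n. norm (S $ n * t^n))"
    using geo_bound_summable[OF S_bound t] .
  have D1: "(\<lambda>n. D $ n * t^n) sums (2 - 4*t + 4*t^2)" "summable (\<lambda>n. norm (D $ n * t^n))"
    using poly_sums[of D t] Dn by (simp_all add: numeral_2_eq_2)
  have P1: "(\<lambda>n. P $ n * t^n) sums (3*t - 4*t^2)"
    using poly_sums(1)[of P t] Pn by (simp add: numeral_2_eq_2)
  have X1: "(\<lambda>n. fps_X $ n * t^n) sums t" "summable (\<lambda>n. norm (fps_X $ n * (t::real)^n))"
    using poly_sums[of "fps_X::real fps" t] Xn by (simp_all add: numeral_2_eq_2)
  define At where "At = (\<Sum>n. fpsA $ n * t^n)"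
  have "(\<lambda>n. (D * fpsA) $ n * t^n) sums ((\<Sum>n. D $ n * t^n) * At)"
    unfolding At_def by (rule fps_cauchy_sums[OF D1(2) sA])
  then have s1: "(\<lambda>n. (D * fpsA) $ n * t^n) sums ((2 - 4*t + 4*t^2) * At)"
    using sums_unique[OF D1(1)] by simp
  have "(\<lambda>n. (fps_X * S) $ n * t^n) sums ((\<Sum>n. fps_X $ n * t^n) * (\<Sum>n. S $ n * t^n))"
    by (rule fps_cauchy_sums[OF X1(2) sS])
  then have s2: "(\<lambda>n. (fps_X * S) $ n * t^n) sums (t * sqrt (1 - 8*t))"
    using sums_unique[OF X1(1)] sums_unique[OF S_sums[OF t]] by simp
  have "(\<lambda>n. P $ n * t^n - (fps_X * S) $ n * t^n) sums (3*t - 4*t^2 - t * sqrt (1 - 8*t))"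
    by (rule sums_diff[OF P1 s2])
  moreover have DP: "D * fpsA = P - fps_X * S" using lin unfolding D_def P_def by (simp add: mult.commute)
  have fe: "(\<lambda>n. (D * fpsA) $ n * t^n) = (\<lambda>n. P $ n * t^n - (fps_X * S) $ n * t^n)"
    by (rule ext) (simp only: DP fps_sub_nth left_diff_distrib)
  ultimately have s3: "(\<lambda>n. (D * fpsA) $ n * t^n) sums (3*t - 4*t^2 - t * sqrt (1 - 8*t))"
    by (simp only: fe)
  have eq: "(2 - 4*t + 4*t^2) * At = 3*t - 4*t^2 - t * sqrt (1 - 8*t)"
    using sums_unique2[OF s1 s3] .
  have pos: "4 * t ^ 2 - 4 * t + 2 > 0"
  proof -
    have "4 * t ^ 2 - 4 * t + 2 = (2*t - 1)^2 + 1" by (simp add: power2_eq_square algebra_simps)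
    then show ?thesis by (metis add_pos_nonneg zero_le_power2 zero_less_one add.commute)
  qed
  have At_eq: "At = (3 * t - 4 * t ^ 2 - t * sqrt (1 - 8 * t)) / (4 * t ^ 2 - 4 * t + 2)"
    using eq pos by (simp add: field_simps)
  have "(\<lambda>n. fpsA $ n * t^n) sums At"
    unfolding At_def by (rule summable_sums) (rule summable_norm_cancel[OF sA])
  then show ?thesis using At_eq by (simp add: fpsA_def)
qed


theorem theorem4p7:
  shows "(2 * fps_X ^ 2 - 2 * fps_X + 1) * fpsA ^ 2 + (4 * fps_X ^ 2 - 3 * fps_X) * fpsA
           + 2 * fps_X ^ 2 = (0 :: real fps) \<and>
         (\<forall>t::real. \<bar>t\<bar> < 1/8 \<longrightarrow>
           (\<lambda>n. coeffA n * t ^ n) sums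
             ((3 * t - 4 * t ^ 2 - t * sqrt (1 - 8 * t)) / (4 * t ^ 2 - 4 * t + 2)))"
  using quad main_sums by blast

end
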